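(* For every non-empty clique $C$ of $G$, $\mathbf{x}(C)$ is a global maximizer of the problem $\max\{f(\mathbf{x}):\mathbf{x}\in\Delta\}$ if and only if $C$ is a maximum clique.
   Context: Let $G=(\mathcal{V},\mathcal{E})$ be a simple undirected graph on vertex set $\mathcal{V}=\{1,\dots,n\}$ with adjacency matrix $\mathbf{A}=(a_{ij})$ ($a_{ij}=1$ if $(i,j)\in\mathcal{E}$, else $0$; $a_{ii}=0$). A clique is a subset $C\subseteq\mathcal{V}$ with $(i,j)\in\mathcal{E}$ for all distinct $i,j\in C$; a maximum clique is one of largest cardinality. Let $\Delta=\{\mathbf{x}\in\mathbb{R}^n:\mathbf{0}\le\mathbf{x}\le\mathbf{1},\ \mathbf{1}^{\mathsf T}\mathbf{x}=1\}$. For a non-empty clique $C$, $\mathbf{x}(C)\in\Delta$ has $x(C)_i=1/|C|$ for $i\in C$ and $0$ otherwise. For $\mathbf{x}\in\Delta$, $\mathcal{P}(\mathbf{x})$ is the set of vectors in $\Delta$ obtained by permuting the coordinates of $\mathbf{x}$. Let $\Phi:X\to\mathbb{R}$ be twice continuously differentiable on an open set $X\supset\Delta$, satisfying for every $\mathbf{x}\in\Delta$: (C1) $\nabla^2\Phi(\mathbf{x})$ is positive semidefinite; (C2) $\|\nabla^2\Phi(\mathbf{x})\|_2<2$; (C3) $\Phi$ is constant on $\mathcal{P}(\mathbf{x})$. Define $f(\mathbf{x})=\mathbf{x}^{\mathsf T}\mathbf{A}\mathbf{x}+\Phi(\mathbf{x})$. *)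

theory Defs
  imports "HOL-Analysis.Analysis" "HOL-Combinatorics.Permutations"
begin

text \<open>Vertices are the elements of the finite type 'n (playing the role of {1..n});
  vectors in R^n are real^'n, the adjacency matrix is real^'n^'n.\<close>

definition adjacency_matrix :: "real^'n^'n \<Rightarrow> bool" where
  "adjacency_matrix A \<longleftrightarrow>
     (\<forall>i j. A $ i $ j = 0 \<or> A $ i $ j = 1) \<and>
     (\<forall>i j. A $ i $ j = A $ j $ i) \<and> (\<forall>i. A $ i $ i = 0)"

definition is_clique :: "real^'n^'n \<Rightarrow> 'n set \<Rightarrow> bool" where
  "is_clique A C \<longleftrightarrow> (\<forall>i\<in>C. \<forall>j\<in>C. i \<noteq> j \<longrightarrow> A $ i $ j = 1)"

definition is_max_clique :: "real^'n^'n \<Rightarrow> 'n set \<Rightarrow> bool" where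
  "is_max_clique A C \<longleftrightarrow> is_clique A C \<and> (\<forall>D. is_clique A D \<longrightarrow> card D \<le> card C)"

definition Delta_set :: "(real^'n) set" where
  "Delta_set = {x. (\<forall>i. 0 \<le> x $ i \<and> x $ i \<le> 1) \<and> (\<Sum>i\<in>UNIV. x $ i) = 1}"

definition clique_vec :: "'n set \<Rightarrow> real^'n" where
  "clique_vec C = (\<chi> i. if i \<in> C then 1 / real (card C) else 0)"

definition perm_set :: "real^'n \<Rightarrow> (real^'n) set" where
  "perm_set x = {(\<chi> i. x $ (\<sigma> i)) | \<sigma>. \<sigma> permutes (UNIV :: 'n set)}"

end

theory Submission
  imports Defs
begin


locale phi_setup =
  fixes \<Phi> :: "real^'n \<Rightarrow> real" and g :: "real^'n \<Rightarrow> real^'n"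
    and H :: "real^'n \<Rightarrow> real^'n^'n" and X :: "(real^'n) set"
  assumes X_sup: "Delta_set \<subseteq> X"
    and grad: "\<And>x. x \<in> X \<Longrightarrow> (\<Phi> has_derivative (\<lambda>h. g x \<bullet> h)) (at x)"
    and hess: "\<And>x. x \<in> X \<Longrightarrow> (g has_derivative (\<lambda>h. H x *v h)) (at x)"
    and C1: "\<And>x v. x \<in> Delta_set \<Longrightarrow> 0 \<le> v \<bullet> (H x *v v)"
    and C2: "\<And>x. x \<in> Delta_set \<Longrightarrow> onorm (\<lambda>v. H x *v v) < 2"
begin

lemma Delta_segment:
  assumes "x \<in> Delta_set" "y \<in> Delta_set" "0 \<le> t" "t \<le> 1"
  shows "x + t *\<^sub>R (y - x) \<in> Delta_set"
proof -
  have c: "x + t *\<^sub>R (y - x) = (1 - t) *\<^sub>R x + t *\<^sub>R y" by (simp add: algebra_simps)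
  have "0 \<le> ((1 - t) *\<^sub>R x + t *\<^sub>R y) $ i \<and> ((1 - t) *\<^sub>R x + t *\<^sub>R y) $ i \<le> 1" for i
  proof -
    have "0 \<le> x$i" "x$i \<le> 1" "0 \<le> y$i" "y$i \<le> 1" using assms unfolding Delta_set_def by auto
    then show ?thesis using assms(3,4)
      by (simp add: convex_bound_le mult_nonneg_nonneg)
  qed
  moreover have "(\<Sum>i\<in>UNIV. ((1 - t) *\<^sub>R x + t *\<^sub>R y) $ i) = 1"
    using assms unfolding Delta_set_def by (simp add: sum.distrib sum_distrib_left[symmetric])
  ultimately show ?thesis unfolding c Delta_set_def by auto
qed

lemma deriv_h:
  assumes "x \<in> Delta_set" "y \<in> Delta_set" "0 \<le> t" "t \<le> 1"
  shows "((\<lambda>t. \<Phi> (x + t *\<^sub>R (y - x))) has_real_derivative (g (x + t *\<^sub>R (y - x)) \<bullet> (y - x))) (at t)"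
proof -
  have X: "x + t *\<^sub>R (y - x) \<in> X" using Delta_segment[OF assms] X_sup by auto
  have l: "((\<lambda>t. x + t *\<^sub>R (y - x)) has_derivative (\<lambda>s. s *\<^sub>R (y - x))) (at t)"
    by (auto intro!: derivative_eq_intros)
  have "((\<lambda>t. \<Phi> (x + t *\<^sub>R (y - x))) has_derivative (\<lambda>s. g (x + t *\<^sub>R (y - x)) \<bullet> (s *\<^sub>R (y - x)))) (at t)"
    using has_derivative_compose[OF l grad[OF X]] by simp
  then show ?thesis unfolding has_field_derivative_def
    by (rule has_derivative_eq_rhs) (auto simp: fun_eq_iff)
qed

lemma deriv_h2:
  assumes "x \<in> Delta_set" "y \<in> Delta_set" "0 \<le> t" "t \<le> 1"
  shows "((\<lambda>t. g (x + t *\<^sub>R (y - x)) \<bullet> (y - x)) has_real_derivative ((y - x) \<bullet> (H (x + t *\<^sub>R (y - x)) *v (y - x)))) (at t)"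
proof -
  have X: "x + t *\<^sub>R (y - x) \<in> X" using Delta_segment[OF assms] X_sup by auto
  have l: "((\<lambda>t. x + t *\<^sub>R (y - x)) has_derivative (\<lambda>s. s *\<^sub>R (y - x))) (at t)"
    by (auto intro!: derivative_eq_intros)
  have "((\<lambda>t. g (x + t *\<^sub>R (y - x))) has_derivative (\<lambda>s. H (x + t *\<^sub>R (y - x)) *v (s *\<^sub>R (y - x)))) (at t)"
    using has_derivative_compose[OF l hess[OF X]] by simp
  then have "((\<lambda>t. g (x + t *\<^sub>R (y - x)) \<bullet> (y - x)) has_derivative (\<lambda>s. (H (x + t *\<^sub>R (y - x)) *v (s *\<^sub>R (y - x))) \<bullet> (y - x))) (at t)"
    by (rule has_derivative_inner_left)
  then show ?thesis unfolding has_field_derivative_def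
    by (rule has_derivative_eq_rhs) (auto simp: fun_eq_iff matrix_vector_mult_scaleR inner_commute)
qed

lemma Hbound:
  assumes "z \<in> Delta_set" "d \<noteq> 0"
  shows "d \<bullet> (H z *v d) < 2 * (norm d)^2"
proof -
  have "d \<bullet> (H z *v d) \<le> norm d * norm (H z *v d)" by (rule norm_cauchy_schwarz)
  also have "\<dots> \<le> norm d * (onorm (\<lambda>v. H z *v v) * norm d)"
    by (rule mult_left_mono[OF onorm]) auto
  also have "\<dots> < norm d * (2 * norm d)"
    using C2[OF assms(1)] assms(2) by (intro mult_strict_left_mono mult_strict_right_mono) auto
  finally show ?thesis by (simp add: power2_eq_square)
qed

lemma Lo:
  assumes x: "x \<in> Delta_set" and y: "y \<in> Delta_set"
  shows "\<Phi> x + g x \<bullet> (y - x) \<le> \<Phi> y"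
proof -
  define d where "d = y - x"
  obtain z where z: "0 < z" "z < 1"
    and ez: "\<Phi> (x + 1 *\<^sub>R (y - x)) - \<Phi> (x + 0 *\<^sub>R (y - x)) = (1 - 0) * (g (x + z *\<^sub>R (y - x)) \<bullet> (y - x))"
    using MVT2[of 0 1 "\<lambda>t. \<Phi> (x + t *\<^sub>R (y - x))", OF _ deriv_h[OF x y]] by auto
  obtain w where w: "0 < w" "w < z"
    and ew: "g (x + z *\<^sub>R (y - x)) \<bullet> (y - x) - g (x + 0 *\<^sub>R (y - x)) \<bullet> (y - x)
       = (z - 0) * ((y - x) \<bullet> (H (x + w *\<^sub>R (y - x)) *v (y - x)))"
    using MVT2[of 0 z "\<lambda>t. g (x + t *\<^sub>R (y - x)) \<bullet> (y - x)", OF _ deriv_h2[OF x y]] z by auto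
  have "0 \<le> (y - x) \<bullet> (H (x + w *\<^sub>R (y - x)) *v (y - x))"
    by (rule C1[OF Delta_segment[OF x y]]) (use w z in auto)
  then show ?thesis using ez ew z by simp (smt (verit) mult_nonneg_nonneg)
qed

lemma Up:
  assumes x: "x \<in> Delta_set" and y: "y \<in> Delta_set" and ne: "y \<noteq> x"
  shows "\<Phi> y < \<Phi> x + g x \<bullet> (y - x) + (norm (y - x))^2"
proof -
  define q where "q = (norm (y - x))^2"
  have d0: "y - x \<noteq> 0" using ne by auto
  have D1: "((\<lambda>t. \<Phi> (x + t *\<^sub>R (y - x)) - t^2 * q) has_real_derivative
      (g (x + t *\<^sub>R (y - x)) \<bullet> (y - x) - 2 * t * q)) (at t)" if "0 \<le> t" "t \<le> 1" for t
    using deriv_h[OF x y that] by (auto intro!: derivative_eq_intros)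
  have D2: "((\<lambda>t. g (x + t *\<^sub>R (y - x)) \<bullet> (y - x) - 2 * t * q) has_real_derivative
      ((y - x) \<bullet> (H (x + t *\<^sub>R (y - x)) *v (y - x)) - 2 * q)) (at t)" if "0 \<le> t" "t \<le> 1" for t
    using deriv_h2[OF x y that] by (auto intro!: derivative_eq_intros)
  obtain z where z: "0 < z" "z < 1"
    and ez: "(\<Phi> (x + 1 *\<^sub>R (y - x)) - 1^2 * q) - (\<Phi> (x + 0 *\<^sub>R (y - x)) - 0^2 * q)
       = (1 - 0) * (g (x + z *\<^sub>R (y - x)) \<bullet> (y - x) - 2 * z * q)"
    using MVT2[of 0 1 "\<lambda>t. \<Phi> (x + t *\<^sub>R (y - x)) - t^2 * q", OF _ D1] by auto
  obtain w where w: "0 < w" "w < z"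
    and ew: "(g (x + z *\<^sub>R (y - x)) \<bullet> (y - x) - 2 * z * q) - (g (x + 0 *\<^sub>R (y - x)) \<bullet> (y - x) - 2 * 0 * q)
       = (z - 0) * ((y - x) \<bullet> (H (x + w *\<^sub>R (y - x)) *v (y - x)) - 2 * q)"
    using MVT2[of 0 z "\<lambda>t. g (x + t *\<^sub>R (y - x)) \<bullet> (y - x) - 2 * t * q", OF _ D2] z by auto
  have "(y - x) \<bullet> (H (x + w *\<^sub>R (y - x)) *v (y - x)) < 2 * q"
    unfolding q_def by (rule Hbound[OF Delta_segment[OF x y] d0]) (use w z in auto)
  then have "z * ((y - x) \<bullet> (H (x + w *\<^sub>R (y - x)) *v (y - x)) - 2 * q) < 0"
    using z by (simp add: mult_pos_neg)
  then show ?thesis using ez ew unfolding q_def by simp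
qed

end


lemma sum_supp:
  fixes y :: "real^'n"
  assumes "\<And>l. l \<notin> S \<Longrightarrow> y $ l = 0"
  shows "(\<Sum>l\<in>UNIV. y $ l) = (\<Sum>l\<in>S. y $ l)"
  by (rule sum.mono_neutral_right) (use assms in auto)

lemma Delta_move:
  fixes y :: "real^'n"
  assumes y: "y \<in> Delta_set" and ij: "i \<noteq> j"
    and "0 \<le> y$i + s" "y$i + s \<le> 1" "0 \<le> y$j - s" "y$j - s \<le> 1"
  shows "y + s *\<^sub>R (axis i 1 - axis j 1) \<in> Delta_set"
proof -
  have comp: "(y + s *\<^sub>R (axis i 1 - axis j 1)) $ l
      = y $ l + (if l = i then s else 0) - (if l = j then s else 0)" for l
    by (simp add: axis_def)
  have "0 \<le> (y + s *\<^sub>R (axis i 1 - axis j 1)) $ l \<and> (y + s *\<^sub>R (axis i 1 - axis j 1)) $ l \<le> 1" for l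
    using assms y unfolding Delta_set_def comp by auto
  moreover have "(\<Sum>l\<in>UNIV. (y + s *\<^sub>R (axis i 1 - axis j 1)) $ l) = 1"
    using y unfolding comp Delta_set_def by (simp add: sum.distrib sum_subtractf)
  ultimately show ?thesis unfolding Delta_set_def by auto
qed

lemma cv_comp: "clique_vec C $ i = (if i \<in> C then 1 / real (card C) else 0)"
  by (simp add: clique_vec_def)

lemma cv_Delta:
  fixes C :: "'n::finite set"
  assumes "C \<noteq> {}"
  shows "clique_vec C \<in> Delta_set"
proof -
  have k: "card C \<ge> 1" using assms by (metis One_nat_def Suc_leI card_gt_0_iff finite)
  have "(\<Sum>l\<in>UNIV. clique_vec C $ l) = (\<Sum>l\<in>C. clique_vec C $ l)"
    by (rule sum_supp) (simp add: cv_comp)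
  also have "\<dots> = 1" using k assms by (simp add: cv_comp)
  finally show ?thesis using k assms unfolding Delta_set_def by (auto simp: cv_comp)
qed

lemma inner_cv:
  fixes y :: "real^'n"
  assumes y: "y \<in> Delta_set" and supp: "\<And>l. l \<notin> S \<Longrightarrow> y $ l = 0"
  shows "y \<bullet> clique_vec S = 1 / real (card S)"
proof -
  have "y \<bullet> clique_vec S = (\<Sum>l\<in>UNIV. y $ l * (if l \<in> S then 1 / real (card S) else 0))"
    by (simp add: inner_vec_def cv_comp)
  also have "\<dots> = (\<Sum>l\<in>UNIV. y $ l) / real (card S)"
    using supp by (simp add: sum_divide_distrib) (intro sum.cong, auto)
  also have "\<dots> = 1 / real (card S)" using y unfolding Delta_set_def by simp
  finally show ?thesis .
qed

lemma cv_self: "C \<noteq> {} \<Longrightarrow> clique_vec C \<bullet> clique_vec C = 1 / real (card C)"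
  by (rule inner_cv[OF cv_Delta]) (auto simp: cv_comp)

lemma quad_clique:
  fixes A :: "real^'n^'n" and y :: "real^'n"
  assumes adj: "adjacency_matrix A" and cl: "is_clique A S" and y: "y \<in> Delta_set"
    and supp: "\<And>l. l \<notin> S \<Longrightarrow> y $ l = 0"
  shows "y \<bullet> (A *v y) = 1 - y \<bullet> y"
proof -
  have tm: "y $ i * (A $ i $ j * y $ j) = y $ i * y $ j - (if i = j then y $ i * y $ j else 0)" for i j
  proof (cases "y $ i = 0 \<or> y $ j = 0")
    case True then show ?thesis by auto
  next
    case False
    then have "i \<in> S" "j \<in> S" using supp by auto
    then show ?thesis using adj cl unfolding adjacency_matrix_def is_clique_def by auto
  qed
  have "y \<bullet> (A *v y) = (\<Sum>i\<in>UNIV. \<Sum>j\<in>UNIV. y $ i * (A $ i $ j * y $ j))"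
    by (simp add: inner_vec_def matrix_vector_mult_def sum_distrib_left)
  also have "\<dots> = (\<Sum>i\<in>UNIV. \<Sum>j\<in>UNIV. y $ i * y $ j) - (\<Sum>i\<in>UNIV. y $ i * y $ i)"
    unfolding tm by (simp add: sum_subtractf)
  also have "(\<Sum>i\<in>UNIV. \<Sum>j\<in>UNIV. y $ i * y $ j) = (\<Sum>i\<in>UNIV. y $ i) * (\<Sum>j\<in>UNIV. y $ j)"
    by (simp add: sum_product)
  also have "\<dots> = 1" using y unfolding Delta_set_def by simp
  also have "(\<Sum>i\<in>UNIV. y $ i * y $ i) = y \<bullet> y" by (simp add: inner_vec_def)
  finally show ?thesis .
qed

lemma quad_line:
  fixes A :: "real^'n^'n" and y e :: "real^'n"
  shows "(y + t *\<^sub>R e) \<bullet> (A *v (y + t *\<^sub>R e))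
     = y \<bullet> (A *v y) + t * (e \<bullet> (A *v y) + y \<bullet> (A *v e)) + t^2 * (e \<bullet> (A *v e))"
  by (simp add: matrix_vector_right_distrib inner_add_left inner_add_right
      matrix_vector_mult_scaleR algebra_simps power2_eq_square)

lemma quad_axis:
  fixes A :: "real^'n^'n"
  assumes adj: "adjacency_matrix A" and "A $ i $ j = 0"
  shows "(axis i 1 - axis j 1) \<bullet> (A *v (axis i 1 - axis j 1)) = 0"
  using assms unfolding adjacency_matrix_def
  by (simp add: matrix_vector_mult_basis matrix_vector_mult_diff_distrib inner_diff_left inner_diff_right
      inner_axis' column_def)



lemma move_comp: "(y + s *\<^sub>R (axis i 1 - axis j 1)) $ l
      = y $ l + (if l = i then s else 0) - (if l = j then s else 0)"
  by (simp add: axis_def)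

locale phi_setup3 = phi_setup +
  assumes C3: "\<And>x y. x \<in> Delta_set \<Longrightarrow> y \<in> perm_set x \<Longrightarrow> \<Phi> y = \<Phi> x"
begin

lemma GS_ge:
  assumes S: "S \<noteq> {}" and i: "i \<in> S" and j: "j \<in> S" and ij: "i \<noteq> j"
  shows "g (clique_vec S) $ i - g (clique_vec S) $ j \<ge> 0"
proof (rule ccontr)
  define c where "c = clique_vec S"
  define D where "D = g c $ i - g c $ j"
  define k where "k = real (card S)"
  define e :: "real^'a" where "e = axis i 1 - axis j 1"
  assume "\<not> ?thesis"
  then have D: "D < 0" unfolding D_def c_def by simp
  have "card S \<ge> 2"
  proof -
    have "{i, j} \<subseteq> S" using i j by auto
    then have "card {i, j} \<le> card S" by (intro card_mono) auto
    then show ?thesis using ij by simp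
  qed
  then have k2: "k \<ge> 2" unfolding k_def by simp
  define t where "t = min (1 / k) (- D)"
  have t0: "t > 0" using D k2 unfolding t_def by auto
  have t1: "t \<le> 1 / k" "t \<le> - D" unfolding t_def by auto
  have hk: "2 / k \<le> 1" using k2 by simp
  have ci: "c $ i = 1 / k" "c $ j = 1 / k" using i j unfolding c_def k_def by (auto simp: cv_comp)
  have cD: "c \<in> Delta_set" unfolding c_def by (rule cv_Delta[OF S])
  have p: "c + t *\<^sub>R e \<in> Delta_set" unfolding e_def
    by (rule Delta_move[OF cD ij]) (use ci t0 t1 hk in auto)
  have p': "c + (- t) *\<^sub>R e \<in> Delta_set" unfolding e_def
    by (rule Delta_move[OF cD ij]) (use ci t0 t1 hk in auto)
  have "(c + t *\<^sub>R e) $ i = c $ i + t" unfolding e_def move_comp using ij by simp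
  then have pne: "c + t *\<^sub>R e \<noteq> c" using t0 by auto
  have ge: "g c \<bullet> e = D" unfolding e_def D_def by (simp add: inner_diff_right inner_axis)
  have ee: "e \<bullet> e = 2" unfolding e_def using ij
    by (simp add: inner_diff_right inner_diff_left inner_axis_axis)
  have nn: "(norm (c + t *\<^sub>R e - c))^2 = 2 * t^2"
  proof -
    have "(norm (c + t *\<^sub>R e - c))^2 = (t *\<^sub>R e) \<bullet> (t *\<^sub>R e)"
      by (simp only: power2_norm_eq_inner add_diff_cancel_left')
    then show ?thesis by (simp add: ee power2_eq_square)
  qed
  have gg: "g c \<bullet> (c + t *\<^sub>R e - c) = t * D" by (simp add: ge)
  have U: "\<Phi> (c + t *\<^sub>R e) < \<Phi> c + t * D + 2 * t^2"
    using Up[OF cD p pne] unfolding nn gg .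
  have L: "\<Phi> c - t * D \<le> \<Phi> (c + (- t) *\<^sub>R e)"
    using Lo[OF cD p'] by (simp add: ge)
  have perm: "c + (- t) *\<^sub>R e \<in> perm_set (c + t *\<^sub>R e)"
  proof -
    have "c + (- t) *\<^sub>R e = (\<chi> l. (c + t *\<^sub>R e) $ (Transposition.transpose i j l))"
      unfolding e_def vec_eq_iff move_comp using ci ij
      by (auto simp: Transposition.transpose_def)
    moreover have "Transposition.transpose i j permutes (UNIV :: 'a set)" by (rule permutes_swap_id) auto
    ultimately show ?thesis unfolding perm_set_def by blast
  qed
  have "\<Phi> (c + (- t) *\<^sub>R e) = \<Phi> (c + t *\<^sub>R e)" by (rule C3[OF p perm])
  then have "- t * D < t * D + 2 * t^2" using U L by linarith
  then have "t * (- D) < t * t" by (simp add: power2_eq_square algebra_simps)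
  then have "- D < t" using mult_less_cancel_left_pos[OF t0, of "- D" t] by simp
  then show False using t1 by simp
qed

lemma GS:
  assumes S: "S \<noteq> {}" and i: "i \<in> S" and j: "j \<in> S"
  shows "g (clique_vec S) $ i = g (clique_vec S) $ j"
proof (cases "i = j")
  case False
  show ?thesis using GS_ge[OF S i j False] GS_ge[OF S j i] False by simp
qed simp

lemma GZ:
  assumes S: "S \<noteq> {}" and y: "y \<in> Delta_set" and supp: "\<And>l. l \<notin> S \<Longrightarrow> y $ l = 0"
  shows "g (clique_vec S) \<bullet> (y - clique_vec S) = 0"
proof -
  obtain i0 where i0: "i0 \<in> S" using S by auto
  define c where "c = clique_vec S"
  have "g c \<bullet> (y - c) = (\<Sum>l\<in>UNIV. g c $ l * (y - c) $ l)" by (simp add: inner_vec_def)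
  also have "\<dots> = (\<Sum>l\<in>S. g c $ l * (y - c) $ l)"
    by (rule sum.mono_neutral_right) (use supp in \<open>auto simp: c_def cv_comp\<close>)
  also have "\<dots> = (\<Sum>l\<in>S. g c $ i0 * (y - c) $ l)"
    by (rule sum.cong) (use GS[OF S _ i0] in \<open>auto simp: c_def\<close>)
  also have "\<dots> = g c $ i0 * ((\<Sum>l\<in>S. y $ l) - (\<Sum>l\<in>S. c $ l))"
    by (simp add: sum_distrib_left[symmetric] sum_subtractf)
  also have "(\<Sum>l\<in>S. y $ l) = 1" using y sum_supp[of S y] supp unfolding Delta_set_def by simp
  also have "(\<Sum>l\<in>S. c $ l) = 1"
    using cv_Delta[OF S] sum_supp[of S c] unfolding Delta_set_def c_def by (simp add: cv_comp)
  finally show ?thesis by (simp add: c_def)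
qed

end


lemma perm_exists:
  fixes S S' :: "'n::finite set"
  assumes "card S = card S'"
  shows "\<exists>\<sigma>. \<sigma> permutes (UNIV :: 'n set) \<and> (\<forall>i. \<sigma> i \<in> S \<longleftrightarrow> i \<in> S')"
proof -
  obtain f where f: "bij_betw f S' S" using finite_same_card_bij[of S' S] assms by auto
  have "card (- S') = card (- S)"
    using assms by (simp add: Compl_eq_Diff_UNIV card_Diff_subset)
  then obtain h where h: "bij_betw h (- S') (- S)" using finite_same_card_bij[of "- S'" "- S"] by auto
  define \<sigma> where "\<sigma> = (\<lambda>x. if x \<in> S' then f x else h x)"
  have "bij_betw \<sigma> (S' \<union> - S') (S \<union> - S)"
    unfolding \<sigma>_def by (rule bij_betw_disjoint_Un[OF f h]) auto
  then have b: "bij_betw \<sigma> UNIV UNIV" by simp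
  have "\<sigma> permutes UNIV" by (rule bij_imp_permutes[OF b]) auto
  moreover have "\<sigma> i \<in> S \<longleftrightarrow> i \<in> S'" for i
    using f h unfolding \<sigma>_def bij_betw_def by auto
  ultimately show ?thesis by blast
qed

context phi_setup3
begin

definition Gv :: "'a set \<Rightarrow> real" where
  "Gv S = 1 - 1 / real (card S) + \<Phi> (clique_vec S)"

lemma size_inv:
  assumes S: "S \<noteq> {}" and c: "card S = card S'"
  shows "\<Phi> (clique_vec S') = \<Phi> (clique_vec S)"
proof -
  obtain \<sigma> where s: "\<sigma> permutes (UNIV :: 'a set)" "\<And>i. \<sigma> i \<in> S \<longleftrightarrow> i \<in> S'"
    using perm_exists[OF c] by blast
  have "clique_vec S' = (\<chi> i. clique_vec S $ (\<sigma> i))"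
    using s(2) c by (simp add: vec_eq_iff cv_comp)
  then have "clique_vec S' \<in> perm_set (clique_vec S)" unfolding perm_set_def using s(1) by blast
  then show ?thesis by (rule C3[OF cv_Delta[OF S]])
qed

lemma Gv_size:
  assumes "S \<noteq> {}" "card S = card S'"
  shows "Gv S' = Gv S"
proof -
  have "\<Phi> (clique_vec S') = \<Phi> (clique_vec S)" by (rule size_inv[OF assms])
  then show ?thesis unfolding Gv_def using assms(2) by simp
qed

lemma Gv_step:
  assumes D: "D \<noteq> {}" and v: "v \<notin> D"
  shows "Gv D < Gv (insert v D)"
proof -
  define E where "E = insert v D"
  define k where "k = real (card D)"
  have E: "E \<noteq> {}" unfolding E_def by auto
  have kE: "real (card E) = k + 1" unfolding E_def k_def using v by simp
  have k0: "k > 0" using D unfolding k_def by (simp add: card_gt_0_iff)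
  define y where "y = clique_vec D"
  define c where "c = clique_vec E"
  have y: "y \<in> Delta_set" unfolding y_def by (rule cv_Delta[OF D])
  have c: "c \<in> Delta_set" unfolding c_def by (rule cv_Delta[OF E])
  have ne: "y \<noteq> c"
  proof
    assume "y = c"
    then have "y $ v = c $ v" by simp
    then show False using v E_def y_def c_def by (simp add: cv_comp)
  qed
  have supp: "\<And>l. l \<notin> E \<Longrightarrow> y $ l = 0" unfolding y_def E_def by (simp add: cv_comp)
  have gz: "g c \<bullet> (y - c) = 0" unfolding c_def y_def
    by (rule GZ[OF E cv_Delta[OF D]]) (use supp y_def in auto)
  have "(norm (y - c))^2 = y \<bullet> y - 2 * (y \<bullet> c) + c \<bullet> c"
    by (simp add: power2_norm_eq_inner inner_diff_left inner_diff_right inner_commute)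
  also have "y \<bullet> y = 1 / k" unfolding y_def k_def by (rule cv_self[OF D])
  also have "y \<bullet> c = 1 / (k + 1)" unfolding c_def using inner_cv[OF y supp] kE by simp
  also have "c \<bullet> c = 1 / (k + 1)" unfolding c_def using cv_self[OF E] kE by simp
  finally have nn: "(norm (y - c))^2 = 1 / k - 1 / (k + 1)" by simp
  have "\<Phi> y < \<Phi> c + g c \<bullet> (y - c) + (norm (y - c))^2" by (rule Up[OF c y ne])
  then have "\<Phi> y < \<Phi> c + 1 / k - 1 / (k + 1)" using gz nn by simp
  then show ?thesis unfolding Gv_def E_def[symmetric] kE k_def[symmetric] y_def[symmetric] c_def[symmetric]
    by simp
qed

lemma Gv_sub:
  assumes D: "D \<noteq> {}"
  shows "Gv D \<le> Gv (D \<union> F)"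
proof -
  have "finite F" by simp
  then show ?thesis
  proof (induction F rule: finite_induct)
    case empty then show ?case by simp
  next
    case (insert x F)
    show ?case
    proof (cases "x \<in> D \<union> F")
      case True
      then have "D \<union> insert x F = D \<union> F" by auto
      then show ?thesis using insert by simp
    next
      case False
      have "Gv (D \<union> F) < Gv (insert x (D \<union> F))" by (rule Gv_step) (use D False in auto)
      then show ?thesis using insert by simp
    qed
  qed
qed

lemma Gv_card:
  assumes D: "D \<noteq> {}" and le: "card D \<le> card E"
  shows "Gv D \<le> Gv E" and "card D < card E \<Longrightarrow> Gv D < Gv E"
proof -
  have "card E - card D \<le> card (UNIV - D)"
    using card_mono[of UNIV E] by (simp add: card_Diff_subset)
  then obtain T where T: "T \<subseteq> UNIV - D" "card T = card E - card D"
    by (rule obtain_subset_with_card_n)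
  have "D \<inter> T = {}" using T by auto
  then have cDT: "card (D \<union> T) = card E" using T le by (simp add: card_Un_disjoint)
  have eq: "Gv E = Gv (D \<union> T)" by (rule Gv_size) (use D cDT in auto)
  show "Gv D \<le> Gv E" using Gv_sub[OF D, of T] eq by simp
  assume lt: "card D < card E"
  then obtain v where vT: "v \<in> T" using T by fastforce
  then have "v \<notin> D" using T by auto
  then have "Gv D < Gv (insert v D)" by (rule Gv_step[OF D])
  also have "\<dots> \<le> Gv (insert v D \<union> T)" by (rule Gv_sub) simp
  also have "insert v D \<union> T = D \<union> T" using vT by auto
  finally show "Gv D < Gv E" using eq by simp
qed

end


lemma Delta_pair:
  fixes y :: "real^'n"
  assumes y: "y \<in> Delta_set" and ij: "i \<noteq> j"
  shows "y $ i + y $ j \<le> 1"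
proof -
  have "(\<Sum>l\<in>{i, j}. y $ l) \<le> (\<Sum>l\<in>UNIV. y $ l)"
    by (rule sum_mono2) (use y in \<open>auto simp: Delta_set_def\<close>)
  then show ?thesis using y ij unfolding Delta_set_def by simp
qed

context phi_setup3
begin

lemma face:
  fixes A :: "real^'a^'a"
  assumes adj: "adjacency_matrix A" and cl: "is_clique A S" and S: "S \<noteq> {}"
    and y: "y \<in> Delta_set" and supp: "\<And>l. l \<notin> S \<Longrightarrow> y $ l = 0"
  shows "y \<bullet> (A *v y) + \<Phi> y \<le> Gv S"
proof -
  define c where "c = clique_vec S"
  define k where "k = real (card S)"
  have c: "c \<in> Delta_set" unfolding c_def by (rule cv_Delta[OF S])
  have Q: "y \<bullet> (A *v y) = 1 - y \<bullet> y" by (rule quad_clique[OF adj cl y supp])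
  have yc: "y \<bullet> c = 1 / k" unfolding c_def k_def by (rule inner_cv[OF y supp])
  have cc: "c \<bullet> c = 1 / k" unfolding c_def k_def by (rule cv_self[OF S])
  have "\<Phi> y \<le> \<Phi> c + (y \<bullet> y - 1 / k)"
  proof (cases "y = c")
    case True then show ?thesis using cc by simp
  next
    case False
    have gz: "g c \<bullet> (y - c) = 0" unfolding c_def by (rule GZ[OF S y supp])
    have "(norm (y - c))^2 = y \<bullet> y - 2 * (y \<bullet> c) + c \<bullet> c"
      by (simp add: power2_norm_eq_inner inner_diff_left inner_diff_right inner_commute)
    then have nn: "(norm (y - c))^2 = y \<bullet> y - 1 / k" using yc cc by simp
    have "\<Phi> y < \<Phi> c + g c \<bullet> (y - c) + (norm (y - c))^2" by (rule Up[OF c y False])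
    then show ?thesis using gz nn by simp
  qed
  then show ?thesis using Q unfolding Gv_def c_def k_def by simp
qed

lemma fval:
  fixes A :: "real^'a^'a"
  assumes adj: "adjacency_matrix A" and cl: "is_clique A S" and S: "S \<noteq> {}"
  shows "clique_vec S \<bullet> (A *v clique_vec S) + \<Phi> (clique_vec S) = Gv S"
proof -
  have "clique_vec S \<bullet> (A *v clique_vec S) = 1 - clique_vec S \<bullet> clique_vec S"
    by (rule quad_clique[OF adj cl cv_Delta[OF S]]) (simp add: cv_comp)
  then show ?thesis unfolding Gv_def using cv_self[OF S] by simp
qed

lemma reduce:
  fixes A :: "real^'a^'a"
  assumes adj: "adjacency_matrix A"
  shows "y \<in> Delta_set \<Longrightarrow> \<exists>S. S \<noteq> {} \<and> is_clique A S \<and> y \<bullet> (A *v y) + \<Phi> y \<le> Gv S"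
proof (induction "card {i. y $ i \<noteq> 0}" arbitrary: y rule: less_induct)
  case less
  note y = less.prems
  define P where "P = {i. y $ i \<noteq> 0}"
  have P: "P \<noteq> {}"
  proof
    assume "P = {}"
    then have "\<And>i. y $ i = 0" unfolding P_def by auto
    then show False using y unfolding Delta_set_def by simp
  qed
  have suppP: "\<And>l. l \<notin> P \<Longrightarrow> y $ l = 0" unfolding P_def by auto
  show ?case
  proof (cases "is_clique A P")
    case True
    then show ?thesis using face[OF adj True P y suppP] P by blast
  next
    case False
    then obtain i j where ij: "i \<in> P" "j \<in> P" "i \<noteq> j" "A $ i $ j \<noteq> 1"
      unfolding is_clique_def by auto
    then have Aij: "A $ i $ j = 0" using adj unfolding adjacency_matrix_def by metis
    define e :: "real^'a" where "e = axis i 1 - axis j 1"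
    have nn: "0 \<le> y $ l" "y $ l \<le> 1" for l using y unfolding Delta_set_def by auto
    have pair: "y $ i + y $ j \<le> 1" by (rule Delta_pair[OF y ij(3)])
    define y1 where "y1 = y + (- (y $ i)) *\<^sub>R e"
    define y2 where "y2 = y + (y $ j) *\<^sub>R e"
    have y1: "y1 \<in> Delta_set" unfolding y1_def e_def
      by (rule Delta_move[OF y ij(3)]) (use nn pair in auto)
    have y2: "y2 \<in> Delta_set" unfolding y2_def e_def
      by (rule Delta_move[OF y ij(3)]) (use nn pair in auto)
    have c1: "card {l. y1 $ l \<noteq> 0} < card {l. y $ l \<noteq> 0}"
    proof (rule psubset_card_mono)
      show "{l. y1 $ l \<noteq> 0} \<subset> {l. y $ l \<noteq> 0}"
      proof
        show "{l. y1 $ l \<noteq> 0} \<subseteq> {l. y $ l \<noteq> 0}"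
          using ij unfolding y1_def e_def move_comp P_def by auto
        show "{l. y1 $ l \<noteq> 0} \<noteq> {l. y $ l \<noteq> 0}"
          using ij unfolding y1_def e_def move_comp P_def by auto
      qed
    qed simp
    have c2: "card {l. y2 $ l \<noteq> 0} < card {l. y $ l \<noteq> 0}"
    proof (rule psubset_card_mono)
      show "{l. y2 $ l \<noteq> 0} \<subset> {l. y $ l \<noteq> 0}"
      proof
        show "{l. y2 $ l \<noteq> 0} \<subseteq> {l. y $ l \<noteq> 0}"
          using ij unfolding y2_def e_def move_comp P_def by auto
        show "{l. y2 $ l \<noteq> 0} \<noteq> {l. y $ l \<noteq> 0}"
          using ij unfolding y2_def e_def move_comp P_def by auto
      qed
    qed simp
    define L where "L = e \<bullet> (A *v y) + y \<bullet> (A *v e)"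
    have eAe: "e \<bullet> (A *v e) = 0" unfolding e_def by (rule quad_axis[OF adj Aij])
    have Qt: "(y + t *\<^sub>R e) \<bullet> (A *v (y + t *\<^sub>R e)) = y \<bullet> (A *v y) + t * L" for t
      using quad_line[of y t e A] eAe unfolding L_def by simp
    have Lt: "\<Phi> y + t * (g y \<bullet> e) \<le> \<Phi> (y + t *\<^sub>R e)" if "y + t *\<^sub>R e \<in> Delta_set" for t
      using Lo[OF y that] by simp
    define s where "s = g y \<bullet> e + L"
    have q1: "y1 \<bullet> (A *v y1) = y \<bullet> (A *v y) + (- (y $ i)) * L" unfolding y1_def by (rule Qt)
    have l1: "\<Phi> y + (- (y $ i)) * (g y \<bullet> e) \<le> \<Phi> y1" unfolding y1_def
      by (rule Lt) (use y1 y1_def in simp)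
    have q2: "y2 \<bullet> (A *v y2) = y \<bullet> (A *v y) + (y $ j) * L" unfolding y2_def by (rule Qt)
    have l2: "\<Phi> y + (y $ j) * (g y \<bullet> e) \<le> \<Phi> y2" unfolding y2_def
      by (rule Lt) (use y2 y2_def in simp)
    have f1: "y \<bullet> (A *v y) + \<Phi> y - y $ i * s \<le> y1 \<bullet> (A *v y1) + \<Phi> y1"
      using q1 l1 unfolding s_def distrib_left by linarith
    have f2: "y \<bullet> (A *v y) + \<Phi> y + y $ j * s \<le> y2 \<bullet> (A *v y2) + \<Phi> y2"
      using q2 l2 unfolding s_def distrib_left by linarith
    show ?thesis
    proof (cases "s \<ge> 0")
      case True
      have "0 \<le> y $ j * s" by (rule mult_nonneg_nonneg[OF nn(1) True])
      then have le: "y \<bullet> (A *v y) + \<Phi> y \<le> y2 \<bullet> (A *v y2) + \<Phi> y2"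
        using f2 by linarith
      obtain S where S: "S \<noteq> {}" "is_clique A S" "y2 \<bullet> (A *v y2) + \<Phi> y2 \<le> Gv S"
        using less.hyps[OF c2 y2] by blast
      have "y \<bullet> (A *v y) + \<Phi> y \<le> Gv S" using le S(3) by linarith
      then show ?thesis using S(1,2) by blast
    next
      case False
      have "0 \<le> y $ i * (- s)" by (rule mult_nonneg_nonneg[OF nn(1)]) (use False in simp)
      then have le: "y \<bullet> (A *v y) + \<Phi> y \<le> y1 \<bullet> (A *v y1) + \<Phi> y1"
        using f1 by simp
      obtain S where S: "S \<noteq> {}" "is_clique A S" "y1 \<bullet> (A *v y1) + \<Phi> y1 \<le> Gv S"
        using less.hyps[OF c1 y1] by blast
      have "y \<bullet> (A *v y) + \<Phi> y \<le> Gv S" using le S(3) by linarith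
      then show ?thesis using S(1,2) by blast
    qed
  qed
qed

end

theorem proposition4:
  fixes A :: "real^'n^'n"
    and \<Phi> :: "real^'n \<Rightarrow> real"
    and g :: "real^'n \<Rightarrow> real^'n"
    and H :: "real^'n \<Rightarrow> real^'n^'n"
    and X :: "(real^'n) set"
    and C :: "'n set"
  assumes adj: "adjacency_matrix A"
    and X_open: "open X" and X_sup: "Delta_set \<subseteq> X"
    and grad: "\<And>x. x \<in> X \<Longrightarrow> (\<Phi> has_derivative (\<lambda>h. g x \<bullet> h)) (at x)"
    and hess: "\<And>x. x \<in> X \<Longrightarrow> (g has_derivative (\<lambda>h. H x *v h)) (at x)"
    and hess_cont: "continuous_on X H"
    and C1: "\<And>x v. x \<in> Delta_set \<Longrightarrow> 0 \<le> v \<bullet> (H x *v v)"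
    and C2: "\<And>x. x \<in> Delta_set \<Longrightarrow> onorm (\<lambda>v. H x *v v) < 2"
    and C3: "\<And>x y. x \<in> Delta_set \<Longrightarrow> y \<in> perm_set x \<Longrightarrow> \<Phi> y = \<Phi> x"
    and clique: "is_clique A C" and nonempty: "C \<noteq> {}"
  shows "(\<forall>y\<in>Delta_set. y \<bullet> (A *v y) + \<Phi> y
            \<le> clique_vec C \<bullet> (A *v clique_vec C) + \<Phi> (clique_vec C))
         \<longleftrightarrow> is_max_clique A C"
proof -
  interpret P: phi_setup3 \<Phi> g H X
    by unfold_locales (use X_sup grad hess C1 C2 C3 in auto)
  have fC: "clique_vec C \<bullet> (A *v clique_vec C) + \<Phi> (clique_vec C) = P.Gv C"
    by (rule P.fval[OF adj clique nonempty])
  show ?thesis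
  proof
    assume M: "\<forall>y\<in>Delta_set. y \<bullet> (A *v y) + \<Phi> y
            \<le> clique_vec C \<bullet> (A *v clique_vec C) + \<Phi> (clique_vec C)"
    have "card D \<le> card C" if D: "is_clique A D" for D
    proof (rule ccontr)
      assume "\<not> card D \<le> card C"
      then have lt: "card C < card D" by simp
      then have Dne: "D \<noteq> {}" by auto
      have "P.Gv C < P.Gv D" by (rule P.Gv_card(2)[OF nonempty]) (use lt in auto)
      also have "P.Gv D = clique_vec D \<bullet> (A *v clique_vec D) + \<Phi> (clique_vec D)"
        by (rule P.fval[OF adj D Dne, symmetric])
      also have "\<dots> \<le> P.Gv C" using M cv_Delta[OF Dne] fC by auto
      finally show False by simp
    qed
    then show "is_max_clique A C" using clique unfolding is_max_clique_def by auto
  next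
    assume M: "is_max_clique A C"
    show "\<forall>y\<in>Delta_set. y \<bullet> (A *v y) + \<Phi> y
            \<le> clique_vec C \<bullet> (A *v clique_vec C) + \<Phi> (clique_vec C)"
    proof
      fix y :: "real^'n" assume y: "y \<in> Delta_set"
      obtain S where S: "S \<noteq> {}" "is_clique A S" "y \<bullet> (A *v y) + \<Phi> y \<le> P.Gv S"
        using P.reduce[OF adj y] by blast
      have "card S \<le> card C" using M S(2) unfolding is_max_clique_def by auto
      then have "P.Gv S \<le> P.Gv C" by (rule P.Gv_card(1)[OF S(1)])
      then show "y \<bullet> (A *v y) + \<Phi> y \<le> clique_vec C \<bullet> (A *v clique_vec C) + \<Phi> (clique_vec C)"
        using S(3) fC by simp
    qed
  qed
qed


end
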